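(* Fix integers $k\ge1$ and $j$. For integers $n\ge1$ and $m\ge0$ with $m+j\ge0$, let $z=\beta_n+iy$ and $$E=\frac{1}{2\pi}\int_{\beta_n< |y|\le \pi}\frac{1}{(e^{-z};e^{-z})_{\infty}}H_{k,m,j}(e^{-z})e^{nz}\,dy.$$ Then $E=O_{j,k}\!\left(\beta_n^{-1/2}\exp\!\left(\tfrac{3}{2}\Lambda_n\right)\right)$ as $n\to+\infty$, uniformly in such $m$.
   Context: $(q;q)_\infty=\prod_{j\ge1}(1-q^j)$. $\beta_n=\pi/\sqrt{6(n-1/24)}$ and $\Lambda_n=\pi\sqrt{(n-1/24)/6}$. For $|q|<1$, $H_{k,m,j}(q)=\sum_{n\ge 1}(-1)^{n-1}q^{(k-1/2)n^2+mn}(q^{-n/2}-q^{n/2})q^{jn}$. *)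

theory Defs
  imports "HOL-Analysis.Analysis"
begin

definition qpoch_inf :: "complex \<Rightarrow> complex" where
  "qpoch_inf q = (\<Prod>i. 1 - q ^ Suc i)"

definition beta_n :: "nat \<Rightarrow> real" where
  "beta_n n = pi / sqrt (6 * (real n - 1/24))"

definition Lambda_n :: "nat \<Rightarrow> real" where
  "Lambda_n n = pi * sqrt ((real n - 1/24) / 6)"

text \<open>H_{k,m,j}(q) evaluated at q = e^{-z}; a real power q^a is read as e^{-a z}.
  Summation index n >= 1 is written as Suc i, i >= 0.\<close>
definition H_at :: "int \<Rightarrow> int \<Rightarrow> int \<Rightarrow> complex \<Rightarrow> complex" where
  "H_at k m j z = (\<Sum>i. let n = real (Suc i) in
      (-1) ^ i
      * exp (- z * of_real ((real_of_int k - 1/2) * n^2 + real_of_int m * n))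
      * (exp (- z * of_real (- n / 2)) - exp (- z * of_real (n / 2)))
      * exp (- z * of_real (real_of_int j * n)))"

definition E_int :: "int \<Rightarrow> int \<Rightarrow> nat \<Rightarrow> int \<Rightarrow> complex" where
  "E_int k j n m = of_real (1 / (2 * pi)) *
     integral {y::real. beta_n n < \<bar>y\<bar> \<and> \<bar>y\<bar> \<le> pi}
       (\<lambda>y. let z = Complex (beta_n n) y in
              H_at k m j z * exp (of_nat n * z) / qpoch_inf (exp (- z)))"

end

theory Submission
  imports Defs "HOL-Complex_Analysis.Weierstrass_Factorization"
begin


lemma qpoch_norm_inv:
  fixes q :: complex
  assumes q: "norm q < 1"
  shows "norm (1 / qpoch_inf q) = exp (\<Sum>m. Re (q^m / (1 - q^m)) / real m)"
proof -
  define r where "r = norm q"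
  have r0: "0 \<le> r" and r1: "r < 1" using q by (auto simp: r_def)
  define f where "f = (\<lambda>i. 1 - q ^ Suc i)"
  have nq: "norm (q ^ Suc i) < 1" for i
    using power_decreasing[of 1 "Suc i" "norm q"] q by (simp add: norm_power norm_mult)
  have fnz: "f i \<noteq> 0" for i
  proof
    assume "f i = 0" then have "q ^ Suc i = 1" by (simp add: f_def)
    with nq[of i] show False by simp
  qed
  have "summable (\<lambda>i. norm q * norm q ^ i)"
    by (intro summable_mult summable_geometric) (use q in simp)
  hence "summable (\<lambda>i. norm (f i - 1))"
    by (simp add: f_def norm_power norm_mult)
  hence cp: "convergent_prod f"
    by (intro abs_convergent_prod_imp_convergent_prod summable_imp_abs_convergent_prod)
  define P where "P = prodinf f"
  have P: "qpoch_inf q = P" by (simp add: qpoch_inf_def P_def f_def)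
  have Pnz: "P \<noteq> 0" unfolding P_def using cp fnz by (rule prodinf_nonzero)
  have limP: "(\<lambda>n. \<Prod>i\<le>n. f i) \<longlonglongrightarrow> P" unfolding P_def using cp by (rule convergent_prod_LIMSEQ)
  define a where "a i m = Re ((q ^ Suc i) ^ m) / real m" for i m
  define b where "b i = - ln (norm (f i))" for i
  define c where "c m = Re (q^m / (1 - q^m)) / real m" for m
  have dom: "norm (a i m) \<le> r^i * r^m" for i m
  proof (cases "m = 0")
    case True then show ?thesis using r0 by (simp add: a_def)
  next
    case False
    have m1: "1 \<le> real m" using False by simp
    have "norm (a i m) = \<bar>Re ((q ^ Suc i) ^ m)\<bar> / real m" by (simp add: a_def)
    also have "\<dots> \<le> norm ((q ^ Suc i) ^ m) / real m"
      using abs_Re_le_cmod m1 by (intro divide_right_mono) auto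
    also have "\<dots> \<le> norm ((q ^ Suc i) ^ m)"
      using m1 by (simp add: divide_le_eq mult_le_cancel_left1)
    also have "\<dots> = r ^ (Suc i * m)" by (simp only: norm_power r_def power_mult)
    also have "\<dots> \<le> r ^ (i + m)"
      using False r0 r1 by (intro power_decreasing) (auto simp: algebra_simps)
    finally show ?thesis by (simp add: power_add)
  qed
  have geo: "((\<lambda>i. r^i) has_sum (1/(1-r))) UNIV"
    using geometric_sums[of r] r0 r1 by (intro sums_nonneg_imp_has_sum) auto
  have gsum: "(\<lambda>(i,m). r^i * r^m) summable_on (Sigma UNIV (\<lambda>_. (UNIV::nat set)))"
  proof (rule summable_on_SigmaI[where g = "\<lambda>i. r^i * (1/(1-r))"])
    fix i :: nat
    show "((\<lambda>m. case (i, m) of (i, m) \<Rightarrow> r ^ i * r ^ m) has_sum r ^ i * (1 / (1 - r))) UNIV"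
      using has_sum_cmult_right[OF geo, of "r^i"] by simp
  next
    show "(\<lambda>i. r ^ i * (1 / (1 - r))) summable_on UNIV"
      using has_sum_cmult_left[OF geo, of "1/(1-r)"] by (auto simp: summable_on_def)
  qed (use r0 in auto)
  have asum: "(\<lambda>(i,m). a i m) summable_on (Sigma UNIV (\<lambda>_. (UNIV::nat set)))"
  proof (rule summable_on_iff_abs_summable_on_real[THEN iffD2], rule Infinite_Sum.abs_summable_on_comparison_test'[OF gsum])
    fix x :: "nat \<times> nat"
    show "norm ((\<lambda>(i,m). a i m) x) \<le> (\<lambda>(i,m). r^i * r^m) x"
      using dom[of "fst x" "snd x"] by (simp add: case_prod_beta)
  qed
  then obtain T where T: "((\<lambda>(i,m). a i m) has_sum T) (Sigma UNIV (\<lambda>_. (UNIV::nat set)))"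
    by (auto simp: summable_on_def)
  have nsum: "summable (\<lambda>m. norm (a i m))" for i
    by (rule summable_comparison_test[of _ "\<lambda>m. r^i * r^m"])
       (use dom r0 r1 in \<open>auto intro!: summable_mult summable_geometric\<close>)
  have nsum2: "summable (\<lambda>i. norm (a i m))" for m
    by (rule summable_comparison_test[of _ "\<lambda>i. r^i * r^m"])
       (use dom r0 r1 in \<open>auto intro!: summable_mult2 summable_geometric\<close>)
  have rows: "(\<lambda>m. a i m) sums b i" for i
  proof -
    have "(\<lambda>n. - ((- (- (q ^ Suc i))) ^ n) / of_nat n) sums ln (1 + (- (q ^ Suc i)))"
      by (rule Ln_series') (use nq in simp)
    hence "(\<lambda>n. - ((q ^ Suc i) ^ n) / of_nat n) sums ln (f i)" by (simp add: f_def)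
    from sums_Re[OF this] have "(\<lambda>n. - a i n) sums Re (ln (f i))"
      by (simp add: a_def Re_divide_of_nat)
    hence "(\<lambda>n. - a i n) sums (- b i)" using fnz by (simp add: b_def)
    from sums_minus[OF this] show ?thesis by simp
  qed
  have cols: "(\<lambda>i. a i m) sums c m" for m
  proof (cases "m = 0")
    case True then show ?thesis by (simp add: a_def c_def)
  next
    case False
    have nqm: "norm (q^m) < 1" using power_decreasing[of 1 m "norm q"] q False by (simp add: norm_power)
    have "(\<lambda>i. q^m * (q^m)^i) sums (q^m * (1 / (1 - q^m)))"
      by (intro sums_mult geometric_sums nqm)
    from sums_Re[OF this] have "(\<lambda>i. Re (q^m * (q^m)^i)) sums Re (q^m / (1 - q^m))" by simp
    from sums_divide[OF this, of "real m"]
    have "(\<lambda>i. Re (q^m * (q^m)^i) / real m) sums c m" by (simp add: c_def)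
    moreover have "(q ^ Suc i) ^ m = q^m * (q^m)^i" for i
      by (simp add: power_mult_distrib power_mult[symmetric] mult.commute)
    ultimately show ?thesis by (simp add: a_def)
  qed
  have bT: "(b has_sum T) UNIV"
    by (rule has_sum_Sigma'[OF T]) (use rows nsum in \<open>auto intro: norm_summable_imp_has_sum\<close>)
  have T': "((\<lambda>(m,i). a i m) has_sum T) (Sigma UNIV (\<lambda>_. (UNIV::nat set)))"
    using has_sum_swap[THEN iffD1, OF T] by (simp add: case_prod_unfold)
  have cT: "(c has_sum T) UNIV"
    by (rule has_sum_Sigma'[OF T']) (use cols nsum2 in \<open>auto intro: norm_summable_imp_has_sum\<close>)
  have bs: "b sums T" by (rule has_sum_imp_sums[OF bT])
  have cs: "c sums T" by (rule has_sum_imp_sums[OF cT])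
  have eq: "norm (1 / (\<Prod>i\<le>n. f i)) = exp (\<Sum>i\<le>n. b i)" for n
  proof -
    have "norm (1 / (\<Prod>i\<le>n. f i)) = (\<Prod>i\<le>n. 1 / norm (f i))"
      by (simp add: norm_divide prod_norm prod_dividef)
    also have "\<dots> = (\<Prod>i\<le>n. exp (b i))"
      using fnz by (intro prod.cong) (auto simp: b_def exp_minus divide_inverse)
    also have "\<dots> = exp (\<Sum>i\<le>n. b i)" by (simp add: exp_sum)
    finally show ?thesis .
  qed
  have l1: "(\<lambda>n. norm (1 / (\<Prod>i\<le>n. f i))) \<longlonglongrightarrow> norm (1 / P)"
    by (intro tendsto_norm tendsto_divide tendsto_const limP Pnz)
  have l2: "(\<lambda>n. norm (1 / (\<Prod>i\<le>n. f i))) \<longlonglongrightarrow> exp T"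
    unfolding eq using bs by (intro tendsto_exp) (simp add: sums_def_le)
  have "norm (1 / P) = exp T" using l1 l2 by (rule LIMSEQ_unique)
  moreover have "T = suminf c" using cs by (simp add: sums_iff)
  ultimately show ?thesis by (simp add: P c_def[abs_def])
qed



lemma phi_bound:
  fixes u :: complex
  assumes u0: "u \<noteq> 0" and u1: "norm u \<le> 1/2"
  shows "Re (1 / (exp u - 1)) \<le> Re (1 / u) + norm u"
proof -
  define t where "t = norm u"
  have t0: "0 < t" using u0 by (simp add: t_def)
  have t1: "t \<le> 1/2" using u1 by (simp add: t_def)
  define E where "E = exp u - 1"
  have Eb: "norm E \<ge> t / 2" using norm_exp_bounds(1)[OF u1] by (simp add: E_def t_def)
  have Enz: "E \<noteq> 0" using Eb t0 by auto
  define \<rho> where "\<rho> = exp u - (1 + u + u^2/2 + u^3/6)"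
  have "norm \<rho> \<le> exp (norm u) * (norm u ^ Suc 3) / fact 3"
    using Taylor_exp_field[of u 3] by (simp add: \<rho>_def eval_nat_numeral fact_numeral algebra_simps)
  also have "exp (norm u) \<le> 2" using real_exp_bound_lemma[of "norm u"] u1 by simp
  hence "exp (norm u) * (norm u ^ Suc 3) / fact 3 \<le> 2 * (norm u ^ Suc 3) / fact 3"
    by (intro divide_right_mono mult_right_mono) auto
  finally have \<rho>b: "norm \<rho> \<le> t^4 / 3" by (simp add: t_def fact_numeral eval_nat_numeral)
  define N where "N = 2*u - 2*E + u*E"
  have Neq: "N = u^3/6 + u^4/6 + (u - 2) * \<rho>"
    by (simp add: N_def E_def \<rho>_def algebra_simps power2_eq_square power3_eq_cube eval_nat_numeral)
       (simp add: field_simps)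
  have "norm N \<le> norm (u^3/6) + norm (u^4/6) + norm ((u - 2) * \<rho>)"
    unfolding Neq by (rule order_trans[OF norm_triangle_ineq add_right_mono[OF norm_triangle_ineq]])
  also have "\<dots> \<le> t^3/6 + t^4/6 + (t + 2) * (t^4/3)"
  proof -
    have "norm ((u - 2) * \<rho>) \<le> (t + 2) * (t^4/3)"
      unfolding norm_mult
      by (intro mult_mono \<rho>b) (use norm_triangle_ineq4[of u 2] in \<open>auto simp: t_def\<close>)
    thus ?thesis by (simp add: norm_divide norm_power t_def)
  qed
  also have "\<dots> \<le> (2/3) * t^3"
  proof -
    have a: "t^4 \<le> t^3 / 2" using t0 t1 by (simp add: power_Suc[of t 3] eval_nat_numeral)
    have b: "(t + 2) * (t^4/3) \<le> (5/2) * ((t^3/2)/3)"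
      by (intro mult_mono divide_right_mono a) (use t0 t1 in auto)
    show ?thesis using a b by simp
  qed
  finally have Nb: "norm N \<le> (2/3) * t^3" .
  define \<phi> where "\<phi> = 1/E - 1/u + 1/2"
  have phieq: "\<phi> = N / (2 * u * E)"
    using u0 Enz by (simp add: \<phi>_def N_def field_simps)
  have "norm \<phi> = norm N / (2 * t * norm E)" by (simp add: phieq norm_divide norm_mult t_def)
  also have "\<dots> \<le> ((2/3) * t^3) / (2 * t * (t/2))"
    by (intro frac_le mult_left_mono Nb Eb) (use t0 in auto)
  also have "\<dots> = (2/3) * t" using t0 by (simp add: field_simps power3_eq_cube)
  finally have pb: "norm \<phi> \<le> (2/3) * t" .
  have "Re (1/E) = Re (1/u) - 1/2 + Re \<phi>" by (simp add: \<phi>_def)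
  also have "\<dots> \<le> Re (1/u) + t" using abs_Re_le_cmod[of \<phi>] pb t0 by linarith
  finally show ?thesis by (simp add: E_def t_def)
qed



lemma inv_sq_sums: "(\<lambda>m. 1 / (real m)^2) sums (pi^2/6)"
proof -
  have "(\<lambda>n. 1 / (real (Suc n))^2) sums (pi^2/6)"
    using inverse_squares_sums by (simp add: add.commute)
  thus ?thesis by (subst (asm) sums_Suc_iff) simp
qed

lemma inv_sq_tail:
  assumes M: "M \<ge> 1"
  shows "(\<Sum>i. 1 / (real (i + Suc M))^2) \<le> 1 / real M"
proof -
  define f where "f n = 1 / (real n + real M)" for n
  have "filterlim (\<lambda>n. real M + real n) at_top sequentially"
    by (rule filterlim_tendsto_add_at_top[OF tendsto_const filterlim_real_sequentially])
  from tendsto_inverse_0_at_top[OF this]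
  have "(\<lambda>n. 1 / (real n + real M)) \<longlonglongrightarrow> 0" by (simp add: add.commute divide_inverse)
  hence "f \<longlonglongrightarrow> 0" by (simp add: f_def[abs_def])
  from telescope_sums'[OF this] have tel: "(\<lambda>n. f n - f (Suc n)) sums (1 / real M)"
    by (simp add: f_def)
  have le: "1 / (real (i + Suc M))^2 \<le> f i - f (Suc i)" for i
  proof -
    have p: "0 < real i + real M" using M by simp
    have "f i - f (Suc i) = 1 / ((real i + real M) * (real i + real M + 1))"
      using p by (simp add: f_def field_simps)
    also have "1 / (real (i + Suc M))^2 \<le> \<dots>"
    proof (intro divide_left_mono)
      show "(real i + real M) * (real i + real M + 1) \<le> (real (i + Suc M))^2"
        using p by (simp add: power2_eq_square algebra_simps)
    qed (use p in auto)
    finally show ?thesis by simp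
  qed
  have s1: "summable (\<lambda>i. 1 / (real (i + Suc M))^2)"
    by (rule summable_comparison_test'[OF sums_summable[OF tel]]) (use le in auto)
  show ?thesis using suminf_le[OF le s1 sums_summable[OF tel]] tel by (simp add: sums_iff)
qed

lemma qpow_eq:
  fixes z :: complex
  shows "exp (-z) ^ m / (1 - exp (-z) ^ m) = 1 / (exp (of_nat m * z) - 1)"
proof -
  have e: "exp (-z) ^ m = 1 / exp (of_nat m * z)"
    by (simp add: exp_of_nat_mult[symmetric] exp_minus field_simps)
  have nz: "exp (of_nat m * z) \<noteq> 0" by simp
  show ?thesis unfolding e using nz
    by (cases "exp (of_nat m * z) = 1") (auto simp: field_simps)
qed

lemma cc_abs:
  fixes z :: complex
  assumes b: "0 < Re z"
  shows "norm (Re (1 / (exp (of_nat m * z) - 1)) / real m) \<le> 1 / ((real m)^2 * Re z)"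
proof (cases "m = 0")
  case True then show ?thesis by simp
next
  case False
  have m1: "1 \<le> real m" using False by simp
  have "norm (exp (of_nat m * z)) - norm (1::complex) \<le> norm (exp (of_nat m * z) - 1)"
    by (rule norm_triangle_ineq2)
  hence "exp (real m * Re z) - 1 \<le> norm (exp (of_nat m * z) - 1)" by simp
  moreover have "real m * Re z \<le> exp (real m * Re z) - 1"
    using exp_ge_add_one_self[of "real m * Re z"] by linarith
  ultimately have nb: "real m * Re z \<le> norm (exp (of_nat m * z) - 1)" by linarith
  have pos: "0 < real m * Re z" using m1 b by simp
  have "norm (Re (1 / (exp (of_nat m * z) - 1)) / real m) \<le> norm (1 / (exp (of_nat m * z) - 1)) / real m"
    using abs_Re_le_cmod m1 by (simp add: divide_right_mono)
  also have "\<dots> = 1 / norm (exp (of_nat m * z) - 1) / real m" by (simp add: norm_divide)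
  also have "\<dots> \<le> 1 / (real m * Re z) / real m"
  proof -
    have np: "0 < norm (exp (of_nat m * z) - 1)" using nb pos by linarith
    show ?thesis by (intro divide_right_mono divide_left_mono nb pos) (use m1 pos np in auto)
  qed
  also have "\<dots> = 1 / ((real m)^2 * Re z)" by (simp add: power2_eq_square field_simps)
  finally show ?thesis .
qed

lemma norm_exp_sub1_ge:
  assumes "0 \<le> b"
  shows "2 * \<bar>sin (y/2)\<bar> \<le> norm (exp (Complex b y) - 1)"
proof -
  have "(norm (exp (Complex b y) - 1))^2 = (exp b * cos y - 1)^2 + (exp b * sin y)^2"
    by (simp add: cmod_power2 Re_exp Im_exp)
  also have "\<dots> = (exp b)^2 * ((sin y)^2 + (cos y)^2) - 2 * exp b * cos y + 1"
    by algebra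
  also have "\<dots> = (exp b - 1)^2 + 2 * exp b * (1 - cos y)"
    unfolding sin_cos_squared_add by algebra
  also have "\<dots> \<ge> 2 * (1 - cos y)"
  proof -
    have "1 \<le> exp b" using assms by simp
    moreover have "0 \<le> 1 - cos y" by simp
    ultimately have "2 * (1 - cos y) \<le> (2 * exp b) * (1 - cos y)"
      by (intro mult_right_mono) auto
    thus ?thesis using zero_le_power2[of "exp b - 1"] by linarith
  qed
  finally have "2 * (1 - cos y) \<le> (norm (exp (Complex b y) - 1))^2" .
  moreover have "2 * (1 - cos y) = (2 * \<bar>sin (y/2)\<bar>)^2"
    using cos_double_sin[of "y/2"] by (simp add: power2_eq_square)
  ultimately show ?thesis
    by (metis abs_of_nonneg norm_ge_zero power2_le_imp_le)
qed



lemma pi2_le: "pi^2 \<le> 10"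
proof -
  have p: "pi \<le> 63/20" using pi_approx by simp
  have "pi^2 \<le> (63/20)^2" by (rule power_mono[OF p]) simp
  also have "(63/20)^2 \<le> (10::real)" by (simp add: power2_eq_square)
  finally show ?thesis .
qed

lemma sin_lower:
  assumes "0 \<le> x" "x \<le> pi/2"
  shows "(7/12) * x \<le> sin x"
proof -
  have "\<bar>sin x - (\<Sum>m<3. sin_coeff m * x ^ m)\<bar> \<le> inverse (fact 3) * \<bar>x\<bar> ^ 3"
    by (rule Maclaurin_sin_bound)
  moreover have "(\<Sum>m<3. sin_coeff m * x ^ m) = x"
    by (simp add: numeral_3_eq_3 sin_coeff_def)
  moreover have "inverse (fact 3) * \<bar>x\<bar> ^ 3 = x^3 / 6"
  proof -
    have f: "(fact 3::real) = 6" by (simp add: fact_numeral)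
    show ?thesis unfolding f using assms by simp
  qed
  ultimately have h: "\<bar>sin x - x\<bar> \<le> x^3 / 6" by simp
  have "x^2 \<le> (pi/2)^2" using assms by (intro power_mono) auto
  also have "\<dots> \<le> 10/4" using pi2_le by (simp add: power_divide)
  finally have "x^2 \<le> 5/2" by simp
  hence "x * x^2 \<le> x * (5/2)" using assms by (intro mult_left_mono) auto
  hence "x^3 \<le> x * (5/2)" by (simp add: power3_eq_cube power2_eq_square)
  with h show ?thesis by linarith
qed

lemma Re_inv_le: assumes "0 < b" "2 * b * b \<le> b^2 + y^2" shows "b / (b^2 + y^2) \<le> 1 / (2 * (b::real))"
proof -
  have D: "0 < b^2 + y^2" using assms by (simp add: add_pos_nonneg)
  have "b / (b^2 + y^2) \<le> b / (2 * b * b)"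
    using assms D by (intro divide_left_mono) (auto intro!: mult_pos_pos)
  also have "\<dots> = 1 / (2 * b)" using assms by simp
  finally show ?thesis .
qed

lemma Re_inv_nat: "Re (1 / (of_nat i * z)) = Re (1 / z) / real i"
proof -
  have "1 / (of_nat i * z) = (1/z) / of_nat i" by simp
  thus ?thesis by (simp only: Re_divide_of_nat)
qed

lemma S_bound:
  fixes b y :: real
  assumes b0: "0 < b" and b1: "b \<le> 1/52" and yb: "b \<le> \<bar>y\<bar>" and ypi: "\<bar>y\<bar> \<le> pi"
  shows "(\<Sum>m. Re (1 / (exp (of_nat m * Complex b y) - 1)) / real m) \<le> pi^2/(12*b) + 53"
proof -
  define z where "z = Complex b y"
  have Rez: "Re z = b" by (simp add: z_def)
  define cc where "cc m = Re (1 / (exp (of_nat m * z) - 1)) / real m" for m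
  define g where "g m = 1 / ((real m)^2 * b)" for m
  have ccg: "norm (cc m) \<le> g m" for m using cc_abs[of z m] b0 by (simp add: cc_def g_def Rez)
  have gs: "g sums (pi^2/6/b)" using sums_divide[OF inv_sq_sums, of b] by (simp add: g_def[abs_def])
  have ccs: "summable cc" by (rule summable_comparison_test'[OF sums_summable[OF gs]]) (use ccg in auto)
  have cc0: "cc 0 = 0" by (simp add: cc_def)
  have g0: "g 0 = 0" by (simp add: g_def)
  have ccle: "cc m \<le> g m" for m using ccg[of m] by simp
  have lhs: "(\<Sum>m. Re (1 / (exp (of_nat m * Complex b y) - 1)) / real m) = suminf cc"
    by (simp add: cc_def[abs_def] z_def)
  have pi2: "pi^2 \<le> 10" by (rule pi2_le)
  show ?thesis
  proof (cases "12 * b \<le> \<bar>y\<bar>")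
    case True
    have split: "suminf cc = (\<Sum>n. cc (n + 2)) + (\<Sum>i<2. cc i)"
      by (rule suminf_split_initial_segment[OF ccs])
    have h2: "(\<Sum>i<2. cc i) = cc 1" by (simp add: cc0 eval_nat_numeral)
    have "(7/12) * (\<bar>y\<bar>/2) \<le> sin (\<bar>y\<bar>/2)" using ypi by (intro sin_lower) auto
    also have "sin (\<bar>y\<bar>/2) = \<bar>sin (y/2)\<bar>"
    proof (cases "0 \<le> y")
      case True
      then show ?thesis using ypi by (simp add: sin_ge_zero)
    next
      case False
      have "0 \<le> sin (-y/2)" by (rule sin_ge_zero) (use False ypi in auto)
      then show ?thesis using False by simp
    qed
    finally have "(7/12) * \<bar>y\<bar> \<le> 2 * \<bar>sin (y/2)\<bar>" by simp
    also have "\<dots> \<le> norm (exp z - 1)" unfolding z_def using b0 by (intro norm_exp_sub1_ge) auto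
    finally have nz: "7 * b \<le> norm (exp z - 1)" using True by linarith
    have c1: "cc 1 \<le> 1 / (7 * b)"
    proof -
      have "cc 1 = Re (1 / (exp z - 1))" by (simp add: cc_def)
      also have "\<dots> \<le> norm (1 / (exp z - 1))" by (rule complex_Re_le_cmod)
      also have "\<dots> = 1 / norm (exp z - 1)" by (simp add: norm_divide)
      also have "\<dots> \<le> 1 / (7 * b)"
      proof -
        have "0 < norm (exp z - 1)" using nz b0 by linarith
        thus ?thesis using nz b0 by (intro divide_left_mono) auto
      qed
      finally show ?thesis .
    qed
    have gt: "(\<lambda>n. g (n + 2)) sums (pi^2/6/b - (\<Sum>i<2. g i))"
      by (rule sums_split_initial_segment[OF gs])
    have g2: "(\<Sum>i<2. g i) = 1 / b" by (simp add: g0 eval_nat_numeral g_def)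
    have tail: "(\<Sum>n. cc (n + 2)) \<le> pi^2/6/b - 1/b"
      using suminf_le[OF ccle summable_ignore_initial_segment[OF ccs] sums_summable[OF gt]] gt g2
      by (simp add: sums_iff)
    have "suminf cc \<le> 1/(7*b) + (pi^2/6/b - 1/b)" using split h2 c1 tail by linarith
    also have "\<dots> = (1/7 + pi^2/6 - 1) / b" using b0 by (simp add: field_simps)
    also have "\<dots> \<le> (pi^2/12) / b" using b0 pi2 by (intro divide_right_mono) auto
    also have "\<dots> \<le> pi^2/(12*b) + 53" by simp
    finally show ?thesis using lhs by simp
  next
    case False
    hence y12: "\<bar>y\<bar> < 12 * b" by simp
    have nz2: "(norm z)^2 = b^2 + y^2" by (simp add: z_def cmod_power2)
    have "(norm z)^2 \<le> (13 * b)^2"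
    proof -
      have "\<bar>y\<bar>^2 \<le> (12*b)^2" using y12 by (intro power_mono) auto
      hence "y^2 \<le> 144 * b^2" by (simp add: power_mult_distrib)
      moreover have "0 \<le> b^2" by simp
      moreover have "(13*b)^2 = 169 * b^2" by (simp add: power_mult_distrib)
      ultimately show ?thesis unfolding nz2 by linarith
    qed
    hence nzb: "norm z \<le> 13 * b" by (rule power2_le_imp_le) (use b0 in simp)
    have Rinv: "Re (1 / z) = b / (b^2 + y^2)"
      by (simp add: z_def Re_divide cmod_power2)
    have Rinv0: "0 \<le> Re (1 / z)" unfolding Rinv using b0 by simp
    have Rinv1: "Re (1 / z) \<le> 1 / (2 * b)"
    proof -
      have "b^2 \<le> \<bar>y\<bar>^2" using yb b0 by (intro power_mono) auto
      hence "b^2 \<le> y^2" by simp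
      hence "2 * b * b \<le> b^2 + y^2" by (simp add: power2_eq_square)
      thus ?thesis unfolding Rinv using b0 by (intro Re_inv_le)
    qed
    define x where "x = 1 / (26 * b)"
    have x2: "2 \<le> x" using b0 b1 by (simp add: x_def field_simps)
    define M where "M = nat \<lfloor>x\<rfloor>"
    have Mle: "real M \<le> x" using x2 by (simp add: M_def)
    have Mge: "x / 2 \<le> real M" using x2 by (simp add: M_def) linarith
    have M1: "1 \<le> M" using Mge x2 by simp
    have split: "suminf cc = (\<Sum>n. cc (n + Suc M)) + (\<Sum>i<Suc M. cc i)"
      by (rule suminf_split_initial_segment[OF ccs])
    have tail: "(\<Sum>n. cc (n + Suc M)) \<le> 52"
    proof -
      have gsum: "summable (\<lambda>n. g (n + Suc M))"
        by (rule summable_ignore_initial_segment[OF sums_summable[OF gs]])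
      have "(\<Sum>n. cc (n + Suc M)) \<le> (\<Sum>n. g (n + Suc M))"
        by (rule suminf_le[OF ccle summable_ignore_initial_segment[OF ccs] gsum])
      also have "(\<Sum>n. g (n + Suc M)) = (\<Sum>n. 1 / (real (n + Suc M))^2) / b"
      proof -
        have s: "summable (\<lambda>n. 1 / (real (n + Suc M))^2)"
          using summable_ignore_initial_segment[OF sums_summable[OF inv_sq_sums], of "Suc M"] by simp
        show ?thesis using suminf_divide[OF s, of b] by (simp add: g_def)
      qed
      also have "\<dots> \<le> (1 / real M) / b"
        using inv_sq_tail[OF M1] b0 by (intro divide_right_mono) auto
      also have "\<dots> \<le> 52"
      proof -
        have "1 / (52 * b) \<le> real M" using Mge by (simp add: x_def)
        hence "1 \<le> real M * (52 * b)" using b0 by (simp add: field_simps)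
        thus ?thesis using b0 M1 by (simp add: field_simps)
      qed
      finally show ?thesis .
    qed
    have trm: "cc i \<le> Re (1 / z) * (1 / (real i)^2) + norm z" if i: "i < Suc M" for i
    proof (cases "i = 0")
      case True then show ?thesis by (simp add: cc0)
    next
      case False
      have i1: "1 \<le> real i" using False by simp
      define u where "u = of_nat i * z"
      have z0: "z \<noteq> 0" using b0 Rez by auto
      have u0: "u \<noteq> 0" using False z0 by (simp add: u_def)
      have nu: "norm u = real i * norm z" by (simp add: u_def norm_mult)
      have "real i * norm z \<le> real M * (13 * b)"
        using i nzb by (intro mult_mono) auto
      also have "\<dots> \<le> x * (13 * b)" using Mle b0 by (intro mult_right_mono) auto
      also have "\<dots> = 1/2" using b0 by (simp add: x_def)
      finally have u1: "norm u \<le> 1/2" using nu by simp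
      have "cc i = Re (1 / (exp u - 1)) / real i" by (simp add: cc_def u_def)
      also have "\<dots> \<le> (Re (1 / u) + norm u) / real i"
        using phi_bound[OF u0 u1] i1 by (intro divide_right_mono) auto
      also have "Re (1 / u) = Re (1 / z) / real i"
        unfolding u_def by (rule Re_inv_nat)
      also have "(Re (1 / z) / real i + norm u) / real i = Re (1 / z) * (1 / (real i)^2) + norm z"
        using i1 by (simp add: nu field_simps power2_eq_square)
      finally show ?thesis .
    qed
    have head: "(\<Sum>i<Suc M. cc i) \<le> Re (1/z) * (pi^2/6) + 1"
    proof -
      have "(\<Sum>i<Suc M. cc i) \<le> (\<Sum>i<Suc M. Re (1 / z) * (1 / (real i)^2) + norm z)"
        by (intro sum_mono trm) auto
      also have "\<dots> = Re (1 / z) * (\<Sum>i<Suc M. 1 / (real i)^2) + real (Suc M) * norm z"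
        by (simp only: sum.distrib sum_distrib_left sum_constant card_lessThan)
      also have "(\<Sum>i<Suc M. 1 / (real i)^2) \<le> pi^2/6"
        using sum_le_suminf[OF sums_summable[OF inv_sq_sums], of "{..<Suc M}"] inv_sq_sums
        by (simp add: sums_iff)
      hence "Re (1 / z) * (\<Sum>i<Suc M. 1 / (real i)^2) \<le> Re (1/z) * (pi^2/6)"
        using Rinv0 by (intro mult_left_mono) auto
      also have "real (Suc M) * norm z \<le> (2 * x) * (13 * b)"
        using Mle M1 nzb by (intro mult_mono) auto
      also have "(2 * x) * (13 * b) = 1" using b0 by (simp add: x_def)
      finally show ?thesis by simp
    qed
    have "Re (1/z) * (pi^2/6) \<le> (1 / (2*b)) * (pi^2/6)"
      using Rinv1 by (intro mult_right_mono) auto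
    hence "suminf cc \<le> (1 / (2*b)) * (pi^2/6) + 53" using split tail head by linarith
    also have "(1 / (2*b)) * (pi^2/6) = pi^2/(12*b)" by simp
    finally show ?thesis using lhs by simp
  qed
qed



lemma H_bound:
  fixes k m j :: int and b y :: real
  assumes k: "1 \<le> k" and mj: "0 \<le> m + j" and b0: "0 < b" and b1: "b \<le> 1"
  shows "norm (H_at k m j (Complex b y)) \<le> 6 * exp (1/8) / sqrt b"
proof -
  define z where "z = Complex b y"
  define t where "t = (\<lambda>i::nat. let n = real (Suc i) in
      (-1) ^ i
      * exp (- z * of_real ((real_of_int k - 1/2) * n^2 + real_of_int m * n))
      * (exp (- z * of_real (- n / 2)) - exp (- z * of_real (n / 2)))
      * exp (- z * of_real (real_of_int j * n)))"
  have H: "H_at k m j (Complex b y) = suminf t" by (simp only: H_at_def t_def z_def)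
  define x where "x = exp (- sqrt b / 2)"
  have x0: "0 < x" and x1: "x < 1" using b0 by (auto simp: x_def)
  have ne: "norm (exp (- z * of_real r)) = exp (- b * r)" for r by (simp add: z_def)
  have tb: "norm (t i) \<le> 2 * exp (1/8) * x^i" for i
  proof -
    define n where "n = real (Suc i)"
    define A where "A = (real_of_int k - 1/2) * n^2 + real_of_int m * n"
    define J where "J = real_of_int j * n"
    have tt: "t i = (-1) ^ i * exp (- z * of_real A) * (exp (- z * of_real (- n / 2)) - exp (- z * of_real (n / 2))) * exp (- z * of_real J)"
      by (simp only: t_def Let_def n_def A_def J_def)
    have d: "norm (exp (- z * of_real (- n / 2)) - exp (- z * of_real (n / 2))) \<le> 2 * exp (b * n / 2)"
    proof -
      have "norm (exp (- z * of_real (- n / 2)) - exp (- z * of_real (n / 2))) \<le> exp (- b * (- n/2)) + exp (- b * (n/2))"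
        using norm_triangle_ineq4[of "exp (- z * of_real (- n / 2))" "exp (- z * of_real (n / 2))"] by (simp only: ne)
      also have "exp (- b * (n/2)) \<le> exp (- b * (- n/2))" using b0 by (simp add: n_def)
      finally show ?thesis by simp
    qed
    have "norm (t i) = exp (- b * A) * norm (exp (- z * of_real (- n / 2)) - exp (- z * of_real (n / 2))) * exp (- b * J)"
      unfolding tt by (simp add: norm_mult norm_power ne z_def)
    also have "\<dots> \<le> exp (- b * A) * (2 * exp (b * n / 2)) * exp (- b * J)"
      by (intro mult_right_mono mult_left_mono d) auto
    also have "\<dots> = 2 * exp (- b * (A + J - n/2))"
      by (simp add: exp_add[symmetric] algebra_simps)
    also have "\<dots> \<le> 2 * exp (- b * (real i)^2 / 2)"
    proof -
      have kk: "1/2 \<le> real_of_int k - 1/2" using k by simp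
      have "(1/2) * n^2 \<le> (real_of_int k - 1/2) * n^2" using kk by (intro mult_right_mono) auto
      hence "n^2/2 \<le> (real_of_int k - 1/2) * n^2" by simp
      moreover have "0 \<le> (real_of_int m + real_of_int j) * n" using mj by (simp add: n_def)
      moreover have "(real i)^2 / 2 \<le> n^2/2 - n/2" by (simp add: n_def power2_eq_square field_simps)
      ultimately have "(real i)^2 / 2 \<le> A + J - n/2" by (simp add: A_def J_def algebra_simps)
      hence "- b * (A + J - n/2) \<le> - b * (real i)^2 / 2" using b0 by simp
      thus ?thesis by simp
    qed
    also have "\<dots> \<le> 2 * exp (1/8 + (- sqrt b / 2) * real i)"
    proof -
      have "0 \<le> (sqrt b * real i - 1/2)^2" by simp
      hence "sqrt b * real i / 2 - 1/8 \<le> (sqrt b * real i)^2 / 2"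
        by (simp add: power2_eq_square algebra_simps)
      also have "(sqrt b * real i)^2 = b * (real i)^2" using b0 by (simp add: power_mult_distrib)
      finally have "- b * (real i)^2 / 2 \<le> 1/8 + (- sqrt b / 2) * real i" by simp
      thus ?thesis by simp
    qed
    also have "\<dots> = 2 * exp (1/8) * x^i"
    proof -
      have "x^i = exp (real i * (- sqrt b / 2))" unfolding x_def by (rule exp_of_nat_mult[symmetric])
      moreover have "exp (1/8 + (- sqrt b / 2) * real i) = exp (1/8) * exp (real i * (- sqrt b / 2))"
        by (simp add: exp_add[symmetric] mult.commute)
      ultimately show ?thesis by simp
    qed
    finally show ?thesis .
  qed
  have gs: "summable (\<lambda>i. 2 * exp (1/8) * x^i)" using x0 x1 by (intro summable_mult summable_geometric) auto
  have ns: "summable (\<lambda>i. norm (t i))"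
    by (rule summable_comparison_test'[OF gs]) (use tb in auto)
  have "norm (suminf t) \<le> (\<Sum>i. norm (t i))" by (rule summable_norm[OF ns])
  also have "\<dots> \<le> (\<Sum>i. 2 * exp (1/8) * x^i)" by (rule suminf_le[OF tb ns gs])
  also have "\<dots> = 2 * exp (1/8) * (1 / (1 - x))"
    using x0 x1 by (simp add: suminf_mult suminf_geometric)
  also have "1 / (1 - x) \<le> 3 / sqrt b"
  proof -
    define s where "s = sqrt b / 2"
    have s0: "0 < s" using b0 by (simp add: s_def)
    have "1 + s \<le> exp s" by (rule exp_ge_add_one_self)
    hence "1 / exp s \<le> 1 / (1 + s)" using s0 by (intro divide_left_mono) auto
    moreover have "x = 1 / exp s" by (simp add: x_def s_def exp_minus inverse_eq_divide)
    ultimately have "x \<le> 1 / (1 + s)" by simp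
    hence "s / (1 + s) \<le> 1 - x" using s0 by (simp add: field_simps)
    moreover have "0 < s / (1 + s)" using s0 by simp
    ultimately have pp: "0 < (1 - x) * (s / (1 + s))" using x1 by (intro mult_pos_pos) auto
    have "1 / (1 - x) \<le> 1 / (s / (1 + s))"
      by (rule divide_left_mono[OF \<open>s / (1 + s) \<le> 1 - x\<close> _ pp]) simp
    also have "\<dots> = 1 + 2 / sqrt b" using s0 b0 by (simp add: s_def field_simps)
    also have "\<dots> \<le> 3 / sqrt b"
    proof -
      have "sqrt b \<le> 1" using b1 by simp
      hence "1 \<le> 1 / sqrt b" using b0 by (simp add: le_divide_eq_1)
      moreover have "1 / sqrt b + 2 / sqrt b = 3 / sqrt b" by (simp add: add_divide_distrib[symmetric])
      ultimately show ?thesis by linarith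
    qed
    finally show ?thesis .
  qed
  hence "2 * exp (1/8) * (1 / (1 - x)) \<le> 2 * exp (1/8) * (3 / sqrt b)" by (intro mult_left_mono) auto
  finally show ?thesis using H by simp
qed



lemma beta_facts:
  assumes n: "1 \<le> n"
  shows "0 < beta_n n" "real n * beta_n n = Lambda_n n + beta_n n / 24"
        "pi^2 / (12 * beta_n n) = Lambda_n n / 2"
proof -
  define X where "X = real n - 1/24"
  have X0: "0 < X" using n by (simp add: X_def)
  define a where "a = sqrt 6"
  define c where "c = sqrt X"
  have a0: "0 < a" by (simp add: a_def)
  have c0: "0 < c" using X0 by (simp add: c_def)
  have aa: "a * a = 6" by (simp add: a_def)
  have cc: "c * c = X" using X0 by (simp add: c_def)
  have B: "beta_n n = pi / (a * c)"
    by (simp add: beta_n_def X_def[symmetric] a_def c_def real_sqrt_mult)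
  have L: "Lambda_n n = pi * c / a"
    by (simp add: Lambda_n_def X_def[symmetric] a_def c_def real_sqrt_divide)
  show "0 < beta_n n" unfolding B using a0 c0 by simp
  have "real n = X + 1/24" by (simp add: X_def)
  hence "real n * beta_n n = X * (pi / (a * c)) + (pi / (a * c)) / 24"
    unfolding B by (simp add: algebra_simps)
  also have "X * (pi / (a * c)) = pi * c / a"
    using a0 c0 unfolding cc[symmetric] by (simp add: field_simps)
  finally show "real n * beta_n n = Lambda_n n + beta_n n / 24" unfolding L B .
  have "pi^2 / (12 * beta_n n) = pi * (a * c) / 12"
    unfolding B using a0 c0 by (simp add: field_simps power2_eq_square)
  also have "\<dots> = pi * c * (a * a) / (12 * a)" using a0 by (simp add: field_simps)
  also have "\<dots> = Lambda_n n / 2" unfolding aa L using a0 by (simp add: field_simps)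
  finally show "pi^2 / (12 * beta_n n) = Lambda_n n / 2" .
qed

lemma beta_small:
  assumes "5000 \<le> n"
  shows "beta_n n \<le> 1/52"
proof -
  have "170 \<le> sqrt (6 * (real n - 1/24))"
    by (rule real_le_rsqrt) (use assms in simp)
  moreover have "pi \<le> 63/20" using pi_approx by simp
  ultimately have "pi / sqrt (6 * (real n - 1/24)) \<le> (63/20) / 170"
    by (intro frac_le) auto
  thus ?thesis by (simp add: beta_n_def)
qed

lemma integral_bound_S:
  fixes F :: "real \<Rightarrow> complex"
  assumes FB: "\<And>y. y \<in> S \<Longrightarrow> norm (F y) \<le> B" and S: "S \<subseteq> {-pi..pi}" and B0: "0 \<le> B"
  shows "norm (integral S F) \<le> B * (2 * pi)"
proof -
  define G where "G y = (if y \<in> S then F y else 0)" for y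
  have eq: "integral S F = integral {-pi..pi} G"
  proof -
    have "S \<inter> {-pi..pi} = S" using S by blast
    thus ?thesis using integral_restrict_Int[of "{-pi..pi}" S F] by (simp add: G_def[abs_def])
  qed
  show ?thesis
  proof (cases "G integrable_on {-pi..pi}")
    case True
    hence hi: "(G has_integral integral {-pi..pi} G) (cbox (-pi) pi)" by (simp add: integrable_integral)
    have GB: "\<And>x. x \<in> cbox (-pi) pi \<Longrightarrow> norm (G x) \<le> B" using FB B0 by (auto simp: G_def)
    from has_integral_bound[OF B0 hi GB]
    have "norm (integral {-pi..pi} G) \<le> B * measure lborel (cbox (-pi) pi)" .
    thus ?thesis using eq by simp
  next
    case False
    hence "integral {-pi..pi} G = 0" by (rule not_integrable_integral)
    thus ?thesis using eq B0 by simp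
  qed
qed



lemma point_bound:
  fixes k m j :: int and n :: nat and y :: real
  assumes k: "1 \<le> k" and mj: "0 \<le> m + j" and n: "1 \<le> n" and bs: "beta_n n \<le> 1/52"
    and yb: "beta_n n < \<bar>y\<bar>" and ypi: "\<bar>y\<bar> \<le> pi"
  shows "norm (let z = Complex (beta_n n) y in H_at k m j z * exp (of_nat n * z) / qpoch_inf (exp (- z)))
         \<le> (6 * exp (1/8) * exp 54) * (beta_n n powr (-1/2) * exp (3/2 * Lambda_n n))"
proof -
  define b where "b = beta_n n"
  have b0: "0 < b" using beta_facts(1)[OF n] by (simp add: b_def)
  have b1: "b \<le> 1/52" using bs by (simp add: b_def)
  define z where "z = Complex b y"
  have Rez: "Re z = b" by (simp add: z_def)
  have nq: "norm (exp (-z)) < 1" using b0 by (simp add: z_def)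
  have inv: "norm (1 / qpoch_inf (exp (-z))) \<le> exp (pi^2/(12*b) + 53)"
  proof -
    have "norm (1 / qpoch_inf (exp (-z))) = exp (\<Sum>m. Re (exp (-z)^m / (1 - exp (-z)^m)) / real m)"
      by (rule qpoch_norm_inv[OF nq])
    also have "(\<Sum>m. Re (exp (-z)^m / (1 - exp (-z)^m)) / real m)
             = (\<Sum>m. Re (1 / (exp (of_nat m * Complex b y) - 1)) / real m)"
      by (simp only: qpow_eq z_def)
    also have "exp \<dots> \<le> exp (pi^2/(12*b) + 53)"
      using S_bound[OF b0 b1 _ ypi] yb by (simp add: b_def)
    finally show ?thesis .
  qed
  have Hb: "norm (H_at k m j z) \<le> 6 * exp (1/8) / sqrt b"
    unfolding z_def by (rule H_bound[OF k mj b0]) (use b1 in simp)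
  have ne: "norm (exp (of_nat n * z)) = exp (real n * b)" by (simp add: z_def)
  have "norm (H_at k m j z * exp (of_nat n * z) / qpoch_inf (exp (- z)))
        = norm (H_at k m j z) * exp (real n * b) * norm (1 / qpoch_inf (exp (-z)))"
    by (simp add: norm_mult norm_divide ne Rez)
  also have "\<dots> \<le> (6 * exp (1/8) / sqrt b) * exp (real n * b) * exp (pi^2/(12*b) + 53)"
    using b0 by (intro mult_mono Hb inv) auto
  also have "\<dots> = 6 * exp (1/8) * (1 / sqrt b) * exp (real n * b + pi^2/(12*b) + 53)"
    by (simp add: exp_add)
  also have "real n * b + pi^2/(12*b) + 53 = 3/2 * Lambda_n n + (b/24 + 53)"
    using beta_facts(2,3)[OF n] by (simp add: b_def)
  finally have fin0: "norm (H_at k m j z * exp (of_nat n * z) / qpoch_inf (exp (- z)))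
      \<le> 6 * exp (1/8) * (1 / sqrt b) * exp (3/2 * Lambda_n n + (b/24 + 53))" .
  have "exp (3/2 * Lambda_n n + (b/24 + 53)) \<le> exp (3/2 * Lambda_n n) * exp 54"
    using b1 b0 by (simp add: exp_add[symmetric])
  hence "6 * exp (1/8) * (1 / sqrt b) * exp (3/2 * Lambda_n n + (b/24 + 53))
        \<le> 6 * exp (1/8) * (1 / sqrt b) * (exp (3/2 * Lambda_n n) * exp 54)"
    using b0 by (intro mult_left_mono) auto
  with fin0 have fin: "norm (H_at k m j z * exp (of_nat n * z) / qpoch_inf (exp (- z)))
      \<le> 6 * exp (1/8) * (1 / sqrt b) * (exp (3/2 * Lambda_n n) * exp 54)" by linarith
  have e: "(-1/2::real) = - (1/2)" by simp
  have "b powr (-1/2) = inverse (b powr (1/2))" unfolding e by (rule powr_minus)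
  also have "b powr (1/2) = sqrt b" using b0 by (simp add: powr_half_sqrt)
  finally have pw: "1 / sqrt b = b powr (-1/2)" by (simp add: inverse_eq_divide)
  have "6 * exp (1/8) * (1 / sqrt b) * (exp (3/2 * Lambda_n n) * exp 54)
        = (6 * exp (1/8) * exp 54) * (b powr (-1/2) * exp (3/2 * Lambda_n n))"
    unfolding pw by simp
  with fin show ?thesis by (simp only: Let_def z_def b_def)
qed

theorem proposition4p2:
  fixes k j :: int
  assumes "k \<ge> 1"
  shows "\<exists>C N. \<forall>n \<ge> N. \<forall>m::int. n \<ge> 1 \<and> m \<ge> 0 \<and> m + j \<ge> 0 \<longrightarrow>
           norm (E_int k j n m) \<le> C * (beta_n n powr (-1/2) * exp (3/2 * Lambda_n n))"
proof (intro exI[of _ "6 * exp (1/8) * exp 54"] exI[of _ "5000::nat"] allI impI)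
  fix n :: nat and m :: int
  assume n: "5000 \<le> n" and h: "n \<ge> 1 \<and> m \<ge> 0 \<and> m + j \<ge> 0"
  define B where "B = (6 * exp (1/8) * exp 54) * (beta_n n powr (-1/2) * exp (3/2 * Lambda_n n))"
  have B0: "0 \<le> B" by (simp add: B_def)
  define S where "S = {y::real. beta_n n < \<bar>y\<bar> \<and> \<bar>y\<bar> \<le> pi}"
  define F where "F = (\<lambda>y. let z = Complex (beta_n n) y in
              H_at k m j z * exp (of_nat n * z) / qpoch_inf (exp (- z)))"
  have E: "E_int k j n m = of_real (1 / (2 * pi)) * integral S F"
    by (simp add: E_int_def S_def F_def)
  have "norm (integral S F) \<le> B * (2 * pi)"
  proof (rule integral_bound_S)
    fix y assume "y \<in> S"
    thus "norm (F y) \<le> B" unfolding F_def B_def S_def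
      using point_bound[OF assms _ _ beta_small[OF n]] h by auto
  next
    show "S \<subseteq> {-pi..pi}" by (auto simp: S_def)
  qed (rule B0)
  hence "norm (integral S F) / (2 * pi) \<le> (B * (2 * pi)) / (2 * pi)"
    by (intro divide_right_mono) auto
  moreover have "norm (E_int k j n m) = norm (integral S F) / (2 * pi)"
    unfolding E by (simp add: norm_mult norm_divide)
  ultimately have "norm (E_int k j n m) \<le> B" by simp
  thus "norm (E_int k j n m) \<le> (6 * exp (1/8) * exp 54) * (beta_n n powr (-1/2) * exp (3/2 * Lambda_n n))"
    by (simp add: B_def)
qed

end
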